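(* Let $K\subset\mathbb R^{d_1}$ be compact and $f:K\to\mathbb R^{d_3}$ continuous. For every $\epsilon>0$ there exist $d_2>0$, $W_1\in\mathrm{Mat}(d_2,d_1)$, $W_2\in\mathrm{Mat}(d_3,d_2)$ and $b\in\mathbb R^{d_2}$ such that the function $f^U_{W_1,W_2,b}(x)=W_2\cdot\sigma_{\mathbb R^{d_2}}(W_1x+b)$ satisfies $\|f^U_{W_1,W_2,b}-f\|_{L^2(K)}<\epsilon$.
   Context: For $n\ge1$, $\sigma_{\mathbb R^n}:\mathbb R^n\to\mathbb R^n$ is defined by $\sigma_{\mathbb R^n}(x)_i=\dfrac{e^{2x_i}}{1+\sum_{j=1}^ne^{2x_j}}$, $i=1,\dots,n$ (the softmax on $(0,x_1,\dots,x_n)$ with the $0$-th component dropped; its image is the interior of the standard simplex with vertices $0,\epsilon_1,\dots,\epsilon_n$). The $L^2(K)$-norm is with respect to Lebesgue measure and the Euclidean norm on $\mathbb R^{d_3}$. *)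

theory Defs
  imports "HOL-Analysis.Analysis"
begin

text \<open>The map sigma on R^n, with vectors in R^n represented as functions
  nat => real restricted to the indices 0..n-1 (index i corresponds to the
  paper's coordinate i+1).\<close>
definition sigmaR :: "nat \<Rightarrow> (nat \<Rightarrow> real) \<Rightarrow> (nat \<Rightarrow> real)" where
  "sigmaR n y = (\<lambda>i. exp (2 * y i) / (1 + (\<Sum>j<n. exp (2 * y j))))"

text \<open>The hidden dimension d2 is a
  natural number; W1 is given by its d2 rows (vectors in R^d1), W2 by its entries
  W2 k i (k a row index in the output type, i < d2), b by its d2 entries.\<close>
definition netU :: "nat \<Rightarrow> (nat \<Rightarrow> real^'n) \<Rightarrow> ('m \<Rightarrow> nat \<Rightarrow> real) \<Rightarrow> (nat \<Rightarrow> real)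
     \<Rightarrow> real^'n \<Rightarrow> real^'m" where
  "netU d2 W1 W2 b x =
     (\<chi> k. \<Sum>i<d2. W2 k i * sigmaR d2 (\<lambda>j. W1 j \<bullet> x + b j) i)"

definition L2normK :: "(real^'n) set \<Rightarrow> (real^'n \<Rightarrow> real^'m) \<Rightarrow> real" where
  "L2normK K g = sqrt (LINT x:K|lborel. (norm (g x))^2)"

end

theory Submission imports Defs begin

lemma L2_bound:
  fixes K :: "(real^'n) set" and g :: "real^'n \<Rightarrow> real^'m"
  assumes K: "compact K" and b: "\<And>x. x \<in> K \<Longrightarrow> norm (g x) \<le> \<delta>" and d: "\<delta> \<ge> 0"
  shows "L2normK K g \<le> \<delta> * sqrt (measure lborel K)"
proof -
  have Ks: "K \<in> sets lborel" using K by (simp add: compact_imp_closed)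
  have Kf: "emeasure lborel K < \<infinity>" using K emeasure_bounded_finite[of K] by (simp add: compact_imp_bounded less_top)
  have ci: "set_integrable lborel K (\<lambda>_. \<delta>^2)"
    unfolding set_integrable_def using Ks Kf by (intro integrable_mult_left integrable_indicator) auto
  have "(LINT x:K|lborel. (norm (g x))^2) \<le> \<delta>^2 * measure lborel K"
  proof (cases "set_integrable lborel K (\<lambda>x. (norm (g x))^2)")
    case True
    have "(LINT x:K|lborel. (norm (g x))^2) \<le> (LINT x:K|lborel. \<delta>^2)"
      by (rule set_integral_mono[OF True ci]) (use b in \<open>auto intro!: power_mono\<close>)
    also have "\<dots> = \<delta>^2 * measure lborel K" using set_integral_const[OF Ks, of "\<delta>^2"] Kf by (simp add: less_top mult.commute)
    finally show ?thesis .
  next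
    case False
    then show ?thesis unfolding set_lebesgue_integral_def set_integrable_def
      by (simp add: not_integrable_integral_eq)
  qed
  then have "L2normK K g \<le> sqrt (\<delta>^2 * measure lborel K)" unfolding L2normK_def by simp
  also have "\<dots> = \<delta> * sqrt (measure lborel K)" using d by (simp add: real_sqrt_mult)
  finally show ?thesis .
qed

definition expsum :: "(real^'n) set \<Rightarrow> (real^'n \<Rightarrow> real) \<Rightarrow> real^'n \<Rightarrow> real" where
  "expsum A c x = (\<Sum>v\<in>A. c v * exp (v \<bullet> x))"

definition ER :: "(real^'n \<Rightarrow> real) set" where
  "ER = {g. \<exists>A c. finite A \<and> g = expsum A c}"

lemma expsum_ext:
  assumes "finite B" "A \<subseteq> B"
  shows "expsum A c = expsum B (\<lambda>v. if v \<in> A then c v else 0)"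
proof
  fix x
  have "expsum B (\<lambda>v. if v \<in> A then c v else 0) x = (\<Sum>v\<in>B. if v \<in> A then c v * exp (v \<bullet> x) else 0)"
    unfolding expsum_def by (intro sum.cong) auto
  also have "\<dots> = (\<Sum>v\<in>B \<inter> A. c v * exp (v \<bullet> x))" by (simp add: sum.inter_restrict[OF assms(1)])
  also have "B \<inter> A = A" using assms(2) by auto
  finally show "expsum A c x = expsum B (\<lambda>v. if v \<in> A then c v else 0) x"
    unfolding expsum_def by simp
qed

lemma ER_add: fixes f g :: "real^'n \<Rightarrow> real" shows "f \<in> ER \<Longrightarrow> g \<in> ER \<Longrightarrow> (\<lambda>x. f x + g x) \<in> ER"
proof -
  assume "f \<in> ER" "g \<in> ER"
  then obtain A c B d where A: "finite A" "f = expsum A c" and B: "finite B" "g = expsum B d"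
    unfolding ER_def by blast
  have f1: "f = expsum (A \<union> B) (\<lambda>v. if v \<in> A then c v else 0)"
    unfolding A(2) by (rule expsum_ext) (use A B in auto)
  have g1: "g = expsum (A \<union> B) (\<lambda>v. if v \<in> B then d v else 0)"
    unfolding B(2) by (rule expsum_ext) (use A B in auto)
  have "(\<lambda>x. f x + g x) = expsum (A \<union> B) (\<lambda>v. (if v \<in> A then c v else 0) + (if v \<in> B then d v else 0))"
  proof
    fix x show "f x + g x = expsum (A \<union> B) (\<lambda>v. (if v \<in> A then c v else 0) + (if v \<in> B then d v else 0)) x"
      unfolding f1 g1 expsum_def sum.distrib[symmetric] by (intro sum.cong refl) (simp add: distrib_right)
  qed
  then show ?thesis using A B unfolding ER_def by blast
qed

lemma ER_mult: fixes f g :: "real^'n \<Rightarrow> real" shows "f \<in> ER \<Longrightarrow> g \<in> ER \<Longrightarrow> (\<lambda>x. f x * g x) \<in> ER"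
proof -
  assume "f \<in> ER" "g \<in> ER"
  then obtain A c B d where A: "finite A" "f = expsum A c" and B: "finite B" "g = expsum B d"
    unfolding ER_def by blast
  define P where "P = A \<times> B"
  define s where "s = (\<lambda>p::(real^'n) \<times> (real^'n). fst p + snd p)"
  define e where "e = (\<lambda>v. \<Sum>p\<in>{p\<in>P. s p = v}. c (fst p) * d (snd p))"
  have fP: "finite P" using A B by (simp add: P_def)
  have "(\<lambda>x. f x * g x) = expsum (s ` P) e"
  proof
    fix x
    have "f x * g x = (\<Sum>a\<in>A. \<Sum>b\<in>B. c a * d b * exp ((a + b) \<bullet> x))"
      unfolding A B expsum_def sum_product
      by (intro sum.cong refl) (simp add: inner_add_left exp_add algebra_simps)
    also have "\<dots> = (\<Sum>p\<in>P. c (fst p) * d (snd p) * exp (s p \<bullet> x))"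
      unfolding P_def s_def by (simp add: sum.cartesian_product case_prod_beta)
    also have "\<dots> = (\<Sum>v\<in>s ` P. \<Sum>p\<in>{p\<in>P. s p = v}. c (fst p) * d (snd p) * exp (s p \<bullet> x))"
      using fP by (rule sum.image_gen)
    also have "\<dots> = (\<Sum>v\<in>s ` P. e v * exp (v \<bullet> x))"
      unfolding e_def sum_distrib_right by (intro sum.cong refl) auto
    finally show "f x * g x = expsum (s ` P) e x" unfolding expsum_def .
  qed
  then show ?thesis using fP unfolding ER_def by blast
qed

lemma ER_const: "(\<lambda>_. k) \<in> ER"
proof -
  have "(\<lambda>_. k) = expsum {0} (\<lambda>_. k)" by (auto simp: expsum_def)
  then show ?thesis unfolding ER_def by blast
qed

lemma ER_cont: "f \<in> ER \<Longrightarrow> continuous_on S f"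
  unfolding ER_def expsum_def by (auto intro!: continuous_intros)

lemma ER_sep: "x \<noteq> y \<Longrightarrow> \<exists>f\<in>ER. f x \<noteq> f y"
proof -
  assume "x \<noteq> y"
  define f where "f = expsum {x - y} (\<lambda>_. 1)"
  have "f \<in> ER" unfolding ER_def f_def by blast
  moreover have "(x - y) \<bullet> x \<noteq> (x - y) \<bullet> y"
  proof
    assume "(x - y) \<bullet> x = (x - y) \<bullet> y"
    then have "(x - y) \<bullet> (x - y) = 0" by (simp add: inner_diff_right)
    then show False using \<open>x \<noteq> y\<close> by simp
  qed
  then have "f x \<noteq> f y" unfolding f_def expsum_def by simp
  ultimately show ?thesis by blast
qed

lemma ER_approx:
  fixes K :: "(real^'n) set"
  assumes "compact K" "continuous_on K f" "\<eta> > 0"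
  shows "\<exists>A c. finite A \<and> (\<forall>x\<in>K. \<bar>f x - expsum A c x\<bar> < \<eta>)"
proof -
  interpret function_ring_on ER K
  proof
    show "compact K" by (rule assms(1))
  next
    fix f g :: "real^'n \<Rightarrow> real"
    show "f \<in> ER \<Longrightarrow> continuous_on K f" by (rule ER_cont)
    show "f \<in> ER \<Longrightarrow> g \<in> ER \<Longrightarrow> (\<lambda>x. f x + g x) \<in> ER" by (rule ER_add)
    show "f \<in> ER \<Longrightarrow> g \<in> ER \<Longrightarrow> (\<lambda>x. f x * g x) \<in> ER" by (rule ER_mult)
  next
    fix c :: real show "(\<lambda>_. c) \<in> ER" by (rule ER_const)
  next
    fix x y :: "real^'n" show "x \<in> K \<Longrightarrow> y \<in> K \<Longrightarrow> x \<noteq> y \<Longrightarrow> \<exists>f\<in>ER. f x \<noteq> f y"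
      using ER_sep by blast
  qed
  obtain g where "g \<in> ER" "\<forall>x\<in>K. \<bar>f x - g x\<bar> < \<eta>"
    using Stone_Weierstrass_basic[OF assms(2,3)] by blast
  then show ?thesis unfolding ER_def by blast
qed


theorem theorem5:
  fixes K :: "(real^'n) set" and f :: "real^'n \<Rightarrow> real^'m" and \<epsilon> :: real
  assumes "compact K" and "continuous_on K f" and "\<epsilon> > 0"
  shows "\<exists>d2::nat. d2 > 0 \<and> (\<exists>W1 W2 b.
           L2normK K (\<lambda>x. netU d2 W1 W2 b x - f x) < \<epsilon>)"
proof -
  define m where "m = real CARD('m)"
  have m0: "m > 0" unfolding m_def by simp
  define mK where "mK = measure lborel K"
  have sq0: "sqrt mK \<ge> 0" unfolding mK_def by simp
  define \<eta> where "\<eta> = \<epsilon> / (2 * m * (sqrt mK + 1))"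
  have eta: "\<eta> > 0" unfolding \<eta>_def using m0 sq0 assms(3) by (simp add: add_nonneg_pos)
  have "\<forall>k. \<exists>A c. finite A \<and> (\<forall>x\<in>K. \<bar>f x $ k - expsum A c x\<bar> < \<eta>)"
    using ER_approx[OF assms(1) continuous_on_component[OF assms(2)] eta] by blast
  then obtain A c where Ac: "\<And>k. finite (A k)" "\<And>k x. x \<in> K \<Longrightarrow> \<bar>f x $ k - expsum (A k) (c k) x\<bar> < \<eta>"
    by metis
  define W where "W = insert 0 (\<Union>k. A k)"
  have fW: "finite W" unfolding W_def using Ac(1) by simp
  define C where "C = (\<lambda>k v. if v \<in> A k then c k v else 0)"
  define G where "G = (\<lambda>k. expsum W (C k))"
  have GW: "expsum (A k) (c k) = G k" for k
    unfolding G_def C_def by (rule expsum_ext[OF fW]) (auto simp: W_def)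
  define S where "S = (\<lambda>x. \<Sum>v\<in>W. exp (v \<bullet> x))"
  have S0: "S x \<ge> 0" for x unfolding S_def by (simp add: sum_nonneg)
  define F where "F = (\<lambda>x. (\<Sum>k\<in>UNIV. \<bar>G k x\<bar>) * S x)"
  have cF: "continuous_on K F" unfolding F_def S_def G_def expsum_def by (intro continuous_intros)
  obtain B where B: "\<And>x. x \<in> K \<Longrightarrow> norm (F x) \<le> B"
    using compact_imp_bounded[OF compact_continuous_image[OF cF assms(1)]]
    unfolding bounded_iff by auto
  have GB: "\<bar>G k x\<bar> * S x \<le> \<bar>B\<bar>" if "x \<in> K" for k x
  proof -
    have "\<bar>G k x\<bar> \<le> (\<Sum>k\<in>UNIV. \<bar>G k x\<bar>)" by (rule member_le_sum) auto
    then have "\<bar>G k x\<bar> * S x \<le> F x" unfolding F_def using S0 by (simp add: mult_right_mono)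
    also have "\<dots> \<le> \<bar>B\<bar>" using B[OF that] by simp
    finally show ?thesis .
  qed
  define t where "t = \<eta> / (\<bar>B\<bar> + 1)"
  have t0: "t > 0" unfolding t_def using eta by (simp add: add_nonneg_pos)
  have tB: "t * \<bar>B\<bar> < \<eta>" unfolding t_def using eta
    by (simp add: field_simps add_nonneg_pos)
  obtain h where h: "bij_betw h {0..<card W} W" using ex_bij_betw_nat_finite[OF fW] by blast
  define d2 where "d2 = card W"
  have d2: "d2 > 0" unfolding d2_def W_def using fW W_def card_gt_0_iff by blast
  have hW: "{..<d2} = {0..<card W}" unfolding d2_def by auto
  define W1 where "W1 = (\<lambda>i. (1/2::real) *\<^sub>R h i)"
  define b where "b = (\<lambda>i::nat. ln t / 2)"
  define W2 where "W2 = (\<lambda>(k::'m) i. C k (h i) / t)"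
  have e: "exp (2 * (W1 j \<bullet> x + b j)) = t * exp (h j \<bullet> x)" for j x
  proof -
    have "2 * (W1 j \<bullet> x + b j) = h j \<bullet> x + ln t"
      unfolding W1_def b_def by (simp add: inner_scaleR_left)
    then show ?thesis using t0 by (simp add: exp_add)
  qed
  have reidx: "(\<Sum>i<d2. g (h i)) = (\<Sum>v\<in>W. g v)" for g :: "real^'n \<Rightarrow> real"
    unfolding hW by (rule sum.reindex_bij_betw[OF h])
  have net: "netU d2 W1 W2 b x $ k = G k x / (1 + t * S x)" for x k
  proof -
    have den: "1 + (\<Sum>j<d2. t * exp (h j \<bullet> x)) = 1 + t * S x"
      unfolding S_def sum_distrib_left[symmetric] using reidx[of "\<lambda>v. exp (v \<bullet> x)"] by simp
    have "netU d2 W1 W2 b x $ k = (\<Sum>i<d2. W2 k i * (t * exp (h i \<bullet> x) / (1 + t * S x)))"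
      unfolding netU_def sigmaR_def e den by simp
    also have "\<dots> = (\<Sum>i<d2. C k (h i) * exp (h i \<bullet> x)) / (1 + t * S x)"
      unfolding sum_divide_distrib W2_def using t0 by (intro sum.cong refl) simp
    also have "\<dots> = G k x / (1 + t * S x)"
      unfolding reidx[of "\<lambda>v. C k v * exp (v \<bullet> x)"] G_def expsum_def by simp
    finally show ?thesis .
  qed
  have comp: "\<bar>(netU d2 W1 W2 b x - f x) $ k\<bar> \<le> 2 * \<eta>" if x: "x \<in> K" for x k
  proof -
    have pos: "1 + t * S x > 0" using t0 S0[of x] by (simp add: add_pos_nonneg)
    have "G k x / (1 + t * S x) - G k x = - G k x * (t * S x) / (1 + t * S x)"
      using pos by (simp add: field_simps)
    then have "\<bar>G k x / (1 + t * S x) - G k x\<bar> = \<bar>G k x\<bar> * (t * S x) / (1 + t * S x)"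
      using pos t0 S0[of x] by (simp add: abs_mult)
    also have "\<dots> \<le> \<bar>G k x\<bar> * (t * S x)"
    proof -
      have a0: "\<bar>G k x\<bar> * (t * S x) \<ge> 0" using t0 S0[of x] by simp
      have "\<bar>G k x\<bar> * (t * S x) \<le> \<bar>G k x\<bar> * (t * S x) * (1 + t * S x)"
        using a0 t0 S0[of x] by (simp add: algebra_simps)
      then show ?thesis using pos by (simp add: divide_le_eq)
    qed
    also have "\<dots> = t * (\<bar>G k x\<bar> * S x)" by simp
    also have "\<dots> \<le> t * \<bar>B\<bar>" using GB[OF x] t0 by (intro mult_left_mono) auto
    finally have 1: "\<bar>G k x / (1 + t * S x) - G k x\<bar> < \<eta>" using tB by linarith
    have 2: "\<bar>f x $ k - G k x\<bar> < \<eta>" using Ac(2)[OF x, of k] GW by simp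
    show ?thesis using 1 2 net[of x k] by simp
  qed
  have nb: "norm (netU d2 W1 W2 b x - f x) \<le> m * (2 * \<eta>)" if "x \<in> K" for x
  proof -
    have "norm (netU d2 W1 W2 b x - f x) \<le> (\<Sum>k\<in>UNIV. \<bar>(netU d2 W1 W2 b x - f x) $ k\<bar>)"
      by (rule norm_le_l1_cart)
    also have "\<dots> \<le> of_nat (card (UNIV::'m set)) * (2 * \<eta>)"
      by (rule sum_bounded_above) (use comp[OF that] in auto)
    finally show ?thesis unfolding m_def by simp
  qed
  have "L2normK K (\<lambda>x. netU d2 W1 W2 b x - f x) \<le> m * (2 * \<eta>) * sqrt mK"
    unfolding mK_def by (rule L2_bound[OF assms(1) nb]) (use m0 eta in auto)
  also have "m * (2 * \<eta>) * sqrt mK = \<epsilon> * (sqrt mK / (sqrt mK + 1))"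
  proof -
    have q: "sqrt mK + 1 > 0" using sq0 by linarith
    have "m * (2 * \<eta>) = \<epsilon> / (sqrt mK + 1)" unfolding \<eta>_def using m0 q by simp
    then show ?thesis by simp
  qed
  also have "\<dots> < \<epsilon>"
  proof -
    have "sqrt mK / (sqrt mK + 1) < 1" using sq0 by (simp add: divide_less_eq add_nonneg_pos)
    then show ?thesis using assms(3) mult_strict_left_mono[of "sqrt mK / (sqrt mK + 1)" 1 \<epsilon>] by simp
  qed
  finally show ?thesis using d2 by blast
qed

end
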